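(* Let $P=(|P|,\preccurlyeq)$ be a finite poset and $S\subseteq|P|$ a chain. Then there is a partial ordering $\preccurlyeq'$ on $|P|$ extending $\preccurlyeq$ (i.e. $x\preccurlyeq y\Rightarrow x\preccurlyeq' y$) such that $|P|\setminus S$ is a chain under $\preccurlyeq'$, and every element of $|P|$ that is $\preccurlyeq$-incomparable with at least one element of $S$ is also $\preccurlyeq'$-incomparable with at least one element of $S$. *)

theory Defs
  imports Main
begin

end

theory Submission
  imports Defs "HOL-Library.Product_Lexorder"
begin

theorem lemma5p4:
  fixes P :: "'a set" and r :: "'a rel" and S :: "'a set"
  assumes "finite P"
    and "r \<subseteq> P \<times> P" and "partial_order_on P r"
    and "S \<subseteq> P"
    and "\<forall>x\<in>S. \<forall>y\<in>S. (x, y) \<in> r \<or> (y, x) \<in> r"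
  shows "\<exists>r'. r' \<subseteq> P \<times> P \<and> partial_order_on P r' \<and> r \<subseteq> r'
    \<and> (\<forall>x\<in>P - S. \<forall>y\<in>P - S. (x, y) \<in> r' \<or> (y, x) \<in> r')
    \<and> (\<forall>x\<in>P. (\<exists>s\<in>S. (x, s) \<notin> r \<and> (s, x) \<notin> r)
                \<longrightarrow> (\<exists>s\<in>S. (x, s) \<notin> r' \<and> (s, x) \<notin> r'))"
proof -
  have fin: "finite S" using assms(1,4) finite_subset by blast
  have sub: "\<And>x y. (x,y)\<in>r \<Longrightarrow> x \<in> P \<and> y \<in> P" using assms(2) by blast
  have refl: "\<And>x. x\<in>P \<Longrightarrow> (x,x)\<in>r"
    using partial_order_onD(1)[OF assms(3)] unfolding refl_on_def by blast
  have tr: "\<And>x y z. (x,y)\<in>r \<Longrightarrow> (y,z)\<in>r \<Longrightarrow> (x,z)\<in>r"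
    using partial_order_onD(2)[OF assms(3)] unfolding trans_def by blast
  have as: "\<And>x y. (x,y)\<in>r \<Longrightarrow> (y,x)\<in>r \<Longrightarrow> x = y"
    using partial_order_onD(3)[OF assms(3)] unfolding antisym_def by blast
  have ch: "\<And>x y. x\<in>S \<Longrightarrow> y\<in>S \<Longrightarrow> (x, y) \<in> r \<or> (y, x) \<in> r" using assms(5) by blast
  obtain f :: "'a \<Rightarrow> nat" and n where fP: "f ` P = {i. i<n}" "inj_on f P"
    using finite_imp_inj_to_nat_seg[OF assms(1)] by blast
  define D where "D x = {s\<in>S. (s,x)\<in>r}" for x
  define U where "U x = {s\<in>S. (x,s)\<in>r}" for x
  define Bl where "Bl x = {w\<in>P. (w,x)\<in>r}" for x
  define g where "g x = (card (D x), (card S - card (U x), (card (Bl x), f x)))" for x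
  have finD: "finite (D x)" and finU: "finite (U x)" and finB: "finite (Bl x)" for x
    using fin assms(1) by (auto simp: D_def U_def Bl_def)
  have cardU: "card (U x) \<le> card S" for x
    using fin by (intro card_mono) (auto simp: U_def)
  have Blstrict: "card (Bl u) < card (Bl v)" if "(u,v)\<in>r" "u \<noteq> v" for u v
  proof (rule psubset_card_mono[OF finB])
    show "Bl u \<subset> Bl v"
      using that sub refl as tr unfolding Bl_def by blast
  qed
  have gmono: "g u \<le> g v" if uv: "(u,v)\<in>r" for u v
  proof (cases "u = v")
    case True then show ?thesis by simp
  next
    case False
    have "D u \<subseteq> D v" using uv tr by (auto simp: D_def)
    hence 1: "card (D u) \<le> card (D v)" using finD card_mono by blast
    have "U v \<subseteq> U u" using uv tr by (auto simp: U_def)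
    hence "card (U v) \<le> card (U u)" using finU card_mono by blast
    hence 2: "card S - card (U u) \<le> card S - card (U v)" by linarith
    have 3: "card (Bl u) < card (Bl v)" using Blstrict uv False by blast
    show ?thesis using 1 2 3 by (auto simp: g_def less_eq_prod_def less_prod_def)
  qed
  have ginj: "u = v" if "u\<in>P" "v\<in>P" "g u = g v" for u v
    using that fP(2) by (auto simp: g_def inj_on_def)
  have Dnest: "D u \<subseteq> D v" if "card (D u) \<le> card (D v)" for u v
  proof -
    have "D u \<subseteq> D v \<or> D v \<subseteq> D u"
    proof (rule ccontr)
      assume "\<not> ?thesis"
      then obtain a b where "a \<in> D u" "a \<notin> D v" "b \<in> D v" "b \<notin> D u" by blast
      then show False using ch[of a b] tr unfolding D_def by blast
    qed
    then show ?thesis using that card_subset_eq[OF finD] by (metis le_antisym card_mono[OF finD])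
  qed
  have Unest: "U v \<subseteq> U u" if "card (U v) \<le> card (U u)" for u v
  proof -
    have "U u \<subseteq> U v \<or> U v \<subseteq> U u"
    proof (rule ccontr)
      assume "\<not> ?thesis"
      then obtain a b where "a \<in> U u" "a \<notin> U v" "b \<in> U v" "b \<notin> U u" by blast
      then show False using ch[of a b] tr unfolding U_def by blast
    qed
    then show ?thesis using that card_subset_eq[OF finU] by (metis le_antisym card_mono[OF finU])
  qed
  have gle: "card (D u) \<le> card (D v) \<and> (card (D u) = card (D v) \<longrightarrow> card S - card (U u) \<le> card S - card (U v))"
    if "g u \<le> g v" for u v
    using that by (auto simp: g_def less_eq_prod_def less_prod_def)
  define r' where "r' = r \<union> {(x,y). \<exists>u\<in>P-S. \<exists>v\<in>P-S. (x,u)\<in>r \<and> g u \<le> g v \<and> (v,y)\<in>r}"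
  have r'sub: "r' \<subseteq> P \<times> P" using assms(2) sub unfolding r'_def by blast
  have r'refl: "refl_on P r'" using refl unfolding refl_on_def r'_def by blast
  have r'trans: "trans r'"
    unfolding trans_def
  proof (intro allI impI)
    fix x y z assume "(x,y)\<in>r'" "(y,z)\<in>r'"
    then show "(x,z)\<in>r'" unfolding r'_def
      using tr gmono order_trans by (smt (verit, ccfv_threshold) Un_iff case_prodD case_prodI mem_Collect_eq)
  qed
  have r'anti: "antisym r'"
    unfolding antisym_def
  proof (intro allI impI)
    fix x y assume xy: "(x,y)\<in>r'" and yx: "(y,x)\<in>r'"
    show "x = y"
    proof (cases "(x,y)\<in>r")
      case xyr: True
      show ?thesis
      proof (cases "(y,x)\<in>r")
        case True then show ?thesis using as xyr by blast
      next
        case False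
        then obtain u v where uv: "u\<in>P-S" "v\<in>P-S" "(y,u)\<in>r" "g u \<le> g v" "(v,x)\<in>r"
          using yx unfolding r'_def by blast
        have "(v,u)\<in>r" using tr uv xyr by blast
        hence "g v \<le> g u" by (rule gmono)
        hence "u = v" using ginj uv by (meson DiffD1 order_antisym)
        then show ?thesis using uv xyr tr as by blast
      qed
    next
      case False
      then obtain u v where uv: "u\<in>P-S" "v\<in>P-S" "(x,u)\<in>r" "g u \<le> g v" "(v,y)\<in>r"
        using xy unfolding r'_def by blast
      show ?thesis
      proof (cases "(y,x)\<in>r")
        case True
        have "(v,u)\<in>r" using tr uv True by blast
        hence "g v \<le> g u" by (rule gmono)
        hence "u = v" using ginj uv by (meson DiffD1 order_antisym)
        then show ?thesis using uv True tr as by blast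
      next
        case False
        then obtain u' v' where uv': "u'\<in>P-S" "v'\<in>P-S" "(y,u')\<in>r" "g u' \<le> g v'" "(v',x)\<in>r"
          using yx unfolding r'_def by blast
        have a: "g v \<le> g u'" using gmono tr uv uv' by blast
        have b: "g v' \<le> g u" using gmono tr uv uv' by blast
        have "g u = g v" using a b uv uv' by order
        hence "u = v" using ginj uv by blast
        have "g u' = g v'" using a b uv uv' by order
        hence "u' = v'" using ginj uv' by blast
        have "g v = g u'" using a b uv uv' by order
        hence "v = u'" using ginj uv uv' by blast
        show ?thesis using \<open>u = v\<close> \<open>u' = v'\<close> \<open>v = u'\<close> uv uv' as tr by metis
      qed
    qed
  qed
  have r'po: "partial_order_on P r'"
    unfolding partial_order_on_def preorder_on_def using r'sub r'refl r'trans r'anti by blast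
  have tot: "\<forall>x\<in>P - S. \<forall>y\<in>P - S. (x, y) \<in> r' \<or> (y, x) \<in> r'"
  proof (intro ballI)
    fix x y assume xy: "x\<in>P-S" "y\<in>P-S"
    have "g x \<le> g y \<or> g y \<le> g x" by (rule linear)
    then show "(x, y) \<in> r' \<or> (y, x) \<in> r'" unfolding r'_def using xy refl by blast
  qed
  have inc: "\<exists>s\<in>S. (x, s) \<notin> r' \<and> (s, x) \<notin> r'"
    if xP: "x\<in>P" and ex: "\<exists>s\<in>S. (x, s) \<notin> r \<and> (s, x) \<notin> r" for x
  proof -
    obtain t where t: "t\<in>S" "(x,t)\<notin>r" "(t,x)\<notin>r" using ex by blast
    have xS: "x \<notin> S" using t ch by blast
    define A where "A = S - D x"
    have "t \<in> A" using t by (auto simp: A_def D_def)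
    then obtain s where s: "s \<in> A" and smin: "\<forall>b. b \<in> A \<longrightarrow> card (Bl s) \<le> card (Bl b)"
      using ex_has_least_nat[of "\<lambda>b. b \<in> A" t "\<lambda>b. card (Bl b)"] by blast
    have sS: "s \<in> S" and sx: "(s,x) \<notin> r" using s by (auto simp: A_def D_def)
    have M: "(w,x)\<in>r" if "w\<in>S" "(w,s)\<in>r" "w \<noteq> s" for w
    proof (rule ccontr)
      assume "(w,x)\<notin>r"
      hence "w \<in> A" using that by (auto simp: A_def D_def)
      hence "card (Bl s) \<le> card (Bl w)" using smin by blast
      moreover have "card (Bl w) < card (Bl s)" using Blstrict that by blast
      ultimately show False by linarith
    qed
    have xsr: "(x,s)\<notin>r"
    proof
      assume xs: "(x,s)\<in>r"
      have "t \<noteq> s" using xs t by blast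
      from ch[OF sS t(1)] show False
        using xs t M[of t] tr by blast
    qed
    have xs': "(x,s)\<notin>r'"
    proof
      assume "(x,s)\<in>r'"
      then obtain u v where uv: "u\<in>P-S" "v\<in>P-S" "(x,u)\<in>r" "g u \<le> g v" "(v,s)\<in>r"
        using xsr unfolding r'_def by blast
      have "D v \<subseteq> D x"
      proof
        fix w assume "w \<in> D v"
        hence w: "w\<in>S" "(w,v)\<in>r" by (auto simp: D_def)
        have "w \<noteq> s" using w uv as sS by blast
        then show "w \<in> D x" using M w uv tr by (auto simp: D_def)
      qed
      moreover have "D x \<subseteq> D u" using uv tr by (auto simp: D_def)
      ultimately have "card (D v) \<le> card (D u)" using finD card_mono by (metis order_trans)
      with gle[OF uv(4)] have "card S - card (U u) \<le> card S - card (U v)" by simp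
      hence "card (U v) \<le> card (U u)" using cardU[of u] cardU[of v] by linarith
      hence "U v \<subseteq> U u" by (rule Unest)
      moreover have "s \<in> U v" using uv sS by (auto simp: U_def)
      ultimately have "(u,s)\<in>r" by (auto simp: U_def)
      then show False using xsr uv tr by blast
    qed
    have sx': "(s,x)\<notin>r'"
    proof
      assume "(s,x)\<in>r'"
      then obtain u v where uv: "u\<in>P-S" "v\<in>P-S" "(s,u)\<in>r" "g u \<le> g v" "(v,x)\<in>r"
        using sx unfolding r'_def by blast
      have "D u \<subseteq> D v" using gle[OF uv(4)] Dnest by blast
      moreover have "s \<in> D u" using uv sS by (auto simp: D_def)
      ultimately show False using uv sx tr by (auto simp: D_def)
    qed
    show ?thesis using sS xs' sx' by blast
  qed
  show ?thesis
    apply (rule exI[of _ r'])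
    using r'sub r'po tot inc by (auto simp: r'_def)
qed

end
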